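(* Let $n \ge 3$, let $k,\ell \in \mathbb{N}_0$, $1 \le a_1 < \cdots < a_k < n$, $0 \le b_1 < \cdots < b_\ell < n$, and suppose the set $C=\{r^{a_1},\ldots,r^{a_k}, r^{b_1}s, \ldots, r^{b_\ell}s\}$ is closed under inversion in $\mathrm{Dih}(n)$. Let $G = \mathrm{Cay}(\mathrm{Dih}(n), C)$. For each $n$-th root of unity $\zeta$ let \[ A_\zeta = \begin{bmatrix} \sum_{j=1}^k \zeta^{a_j} & \sum_{j=1}^\ell \zeta^{-b_j} \\ \sum_{j=1}^\ell \zeta^{b_j} & \sum_{j=1}^k \zeta^{a_j}\end{bmatrix}. \] Then $G$ is a nut graph if and only if exactly one of the matrices $A_\zeta$ has $0$ as a simple eigenvalue, while all the other $A_\zeta$ are invertible.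
   Context: $\mathrm{Dih}(n) = \langle r, s \mid r^n = s^2 = e,\ srs = r^{-1}\rangle$ is the dihedral group of order $2n$. For a finite group $\Gamma$ with identity $e$ and $C \subseteq \Gamma\setminus\{e\}$ closed under inversion, $\mathrm{Cay}(\Gamma, C)$ is the graph with vertex set $\Gamma$ in which $u,v$ are adjacent iff $vu^{-1}\in C$. A nut graph is a graph with at least two vertices whose adjacency matrix has eigenvalue $0$ with multiplicity exactly one, such that the corresponding eigenvector has no zero entries. *)

theory Defs
  imports "Jordan_Normal_Form.Char_Poly" "HOL-Computational_Algebra.Polynomial"
begin

text \<open>Dihedral group Dih(n) of order 2n. The element r^i s^t (0 \<le> i < n, t \<in> {0,1})
  is represented by the pair (i, t) with t :: bool (True meaning the factor s is present).\<close>

definition dih_carrier :: "nat \<Rightarrow> (nat \<times> bool) set" where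
  "dih_carrier n = {0..<n} \<times> UNIV"

definition dih_e :: "(nat \<times> bool)" where
  "dih_e = (0, False)"

text \<open>(r^i s^a)(r^j s^b) = r^(i + (-1)^a j) s^(a+b), using s r^j = r^(-j) s.\<close>
definition dih_mult :: "nat \<Rightarrow> (nat \<times> bool) \<Rightarrow> (nat \<times> bool) \<Rightarrow> (nat \<times> bool)" where
  "dih_mult n x y = (case x of (i, a) \<Rightarrow> case y of (j, b) \<Rightarrow>
     ((if a then i + (n - j) else i + j) mod n, a \<noteq> b))"

definition dih_inv :: "nat \<Rightarrow> (nat \<times> bool) \<Rightarrow> (nat \<times> bool)" where
  "dih_inv n x = (case x of (i, a) \<Rightarrow> if a then (i, True) else ((n - i) mod n, False))"

definition dih_cay_adj :: "nat \<Rightarrow> (nat \<times> bool) set \<Rightarrow> (nat \<times> bool) \<Rightarrow> (nat \<times> bool) \<Rightarrow> bool" where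
  "dih_cay_adj n C u v \<longleftrightarrow> dih_mult n v (dih_inv n u) \<in> C"

definition dih_vertex :: "nat \<Rightarrow> nat \<Rightarrow> (nat \<times> bool)" where
  "dih_vertex n k = (k mod n, n \<le> k)"

definition dih_cay_adj_matrix :: "nat \<Rightarrow> (nat \<times> bool) set \<Rightarrow> real mat" where
  "dih_cay_adj_matrix n C = mat (2 * n) (2 * n)
     (\<lambda>(k, l). if dih_cay_adj n C (dih_vertex n k) (dih_vertex n l) then 1 else 0)"

definition mult_zero_eig :: "'a :: field mat \<Rightarrow> nat" where
  "mult_zero_eig M = order 0 (char_poly M)"

definition is_nut_adj :: "real mat \<Rightarrow> bool" where
  "is_nut_adj M \<longleftrightarrow> dim_row M \<ge> 2 \<and> mult_zero_eig M = 1 \<and>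
     (\<forall>v \<in> carrier_vec (dim_col M). v \<noteq> 0\<^sub>v (dim_col M) \<and> M *\<^sub>v v = 0\<^sub>v (dim_row M)
        \<longrightarrow> (\<forall>i < dim_col M. v $ i \<noteq> 0))"

definition dih_conn :: "nat set \<Rightarrow> nat set \<Rightarrow> (nat \<times> bool) set" where
  "dih_conn A B = (\<lambda>a. (a, False)) ` A \<union> (\<lambda>b. (b, True)) ` B"

definition A_zeta :: "nat set \<Rightarrow> nat set \<Rightarrow> complex \<Rightarrow> complex mat" where
  "A_zeta A B z = mat 2 2 (\<lambda>(i, j).
     if i = j then (\<Sum>a\<in>A. z ^ a)
     else if i = 0 then (\<Sum>b\<in>B. inverse z ^ b)
     else (\<Sum>b\<in>B. z ^ b))"

end

theory Submission
  imports Defs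
begin

lemma pow_mod_root: assumes "(z::complex) ^ n = 1" shows "z ^ m = z ^ (m mod n)"
proof -
  have "z ^ m = z ^ (n * (m div n) + m mod n)" by simp
  also have "\<dots> = (z^n)^(m div n) * z^(m mod n)" unfolding power_mult[symmetric] power_add[symmetric] by simp
  finally show ?thesis using assms by simp
qed

lemma sumX: assumes z: "(z::complex) ^ n = 1" and i: "i < n" and A: "A \<subseteq> {..<n}"
  shows "(\<Sum>j\<in>{0..<n}. (if (j + n - i) mod n \<in> A then 1 else 0) * z ^ j) = z ^ i * (\<Sum>a\<in>A. z ^ a)"
proof -
  have fA: "finite A" using A finite_subset by blast
  have "(\<Sum>j\<in>{0..<n}. (if (j + n - i) mod n \<in> A then 1 else 0) * z ^ j)
     = (\<Sum>j\<in>{j\<in>{0..<n}. (j + n - i) mod n \<in> A}. z ^ j)"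
    by (subst sum.inter_filter[OF finite_atLeastLessThan]) (rule sum.cong, simp_all)
  also have "\<dots> = (\<Sum>a\<in>A. z ^ (i + a))"
  proof (rule sym, rule sum.reindex_bij_witness[where j = "\<lambda>a. (i + a) mod n" and i = "\<lambda>j. (j + n - i) mod n"])
    fix a assume "a \<in> A" then have a: "a < n" using A by auto
    show "((i + a) mod n + n - i) mod n = a" using a i
      by (cases "i + a < n") (simp_all add: mod_if)
    then show "(i + a) mod n \<in> {j \<in> {0..<n}. (j + n - i) mod n \<in> A}" using \<open>a \<in> A\<close> i by auto
    show "z ^ ((i + a) mod n) = z ^ (i + a)" using pow_mod_root[OF z] by metis
  next
    fix b assume b: "b \<in> {j \<in> {0..<n}. (j + n - i) mod n \<in> A}"
    then show "(b + n - i) mod n \<in> A" by auto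
    show "(i + (b + n - i) mod n) mod n = b" using b i
      by (simp add: mod_add_right_eq)
  qed
  also have "\<dots> = z ^ i * (\<Sum>a\<in>A. z ^ a)" by (simp add: power_add sum_distrib_left)
  finally show ?thesis .
qed

lemma sumH: assumes z: "(z::complex) ^ n = 1" and i: "i < n" and B: "B \<subseteq> {..<n}"
  shows "(\<Sum>j\<in>{0..<n}. (if (i + j) mod n \<in> B then 1 else 0) * z ^ j) = inverse z ^ i * (\<Sum>b\<in>B. z ^ b)"
proof -
  have z0: "z \<noteq> 0" using z i by (metis gr_implies_not0 power_0_left zero_neq_one)
  have "(\<Sum>j\<in>{0..<n}. (if (i + j) mod n \<in> B then 1 else 0) * z ^ j)
     = (\<Sum>j\<in>{j\<in>{0..<n}. (i + j) mod n \<in> B}. z ^ j)"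
    by (subst sum.inter_filter[OF finite_atLeastLessThan]) (rule sum.cong, simp_all)
  also have "\<dots> = (\<Sum>b\<in>B. z ^ (b + n - i))"
  proof (rule sym, rule sum.reindex_bij_witness[where j = "\<lambda>b. (b + n - i) mod n" and i = "\<lambda>j. (i + j) mod n"])
    fix a assume "a \<in> B" then have a: "a < n" using B by auto
    show e: "(i + (a + n - i) mod n) mod n = a" using a i
      by (simp add: mod_add_right_eq)
    show "(a + n - i) mod n \<in> {j \<in> {0..<n}. (i + j) mod n \<in> B}" using \<open>a \<in> B\<close> i a e
      by simp
    show "z ^ ((a + n - i) mod n) = z ^ (a + n - i)" using pow_mod_root[OF z] by metis
  next
    fix b assume b: "b \<in> {j \<in> {0..<n}. (i + j) mod n \<in> B}"
    then show "(i + b) mod n \<in> B" by auto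
    show "((i + b) mod n + n - i) mod n = b" using b i
      by (cases "i + b < n") (auto simp: mod_if)
  qed
  also have "\<dots> = (\<Sum>b\<in>B. inverse z ^ i * z ^ b)"
  proof (rule sum.cong[OF refl])
    fix b assume "b \<in> B"
    have "z ^ (b + n - i) * z ^ i = z ^ b" using i z by (simp add: power_add[symmetric]) (simp add: power_add)
    then show "z ^ (b + n - i) = inverse z ^ i * z ^ b" using z0
      by (metis mult.commute nonzero_eq_divide_eq power_inverse divide_inverse power_not_zero)
  qed
  also have "\<dots> = inverse z ^ i * (\<Sum>b\<in>B. z ^ b)" by (simp add: sum_distrib_left)
  finally show ?thesis .
qed

definition dg :: "nat \<Rightarrow> (nat \<Rightarrow> 'a::zero) \<Rightarrow> 'a mat" where
  "dg n f = mat n n (\<lambda>(i,j). if i = j then f i else 0)"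

lemma dg_carrier[simp]: "dg n f \<in> carrier_mat n n" by (simp add: dg_def)
lemma dg_dims[simp]: "dim_row (dg n f) = n" "dim_col (dg n f) = n" by (simp_all add: dg_def)
lemma dg_index[simp]: "i < n \<Longrightarrow> j < n \<Longrightarrow> dg n f $$ (i,j) = (if i = j then f i else 0)"
  by (simp add: dg_def)

lemma mult_dg: assumes A: "(A :: 'a :: semiring_0 mat) \<in> carrier_mat m n"
  shows "A * dg n f = mat m n (\<lambda>(i,j). A $$ (i,j) * f j)"
proof (rule eq_matI)
  fix i j assume i: "i < dim_row (mat m n (\<lambda>(i,j). A $$ (i,j) * f j))" and j: "j < dim_col (mat m n (\<lambda>(i,j). A $$ (i,j) * f j))"
  then have i: "i < m" and j: "j < n" by auto
  have "(A * dg n f) $$ (i,j) = (\<Sum>l\<in>{0..<n}. A $$ (i,l) * (if l = j then f j else 0))"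
    using A i j by (auto simp: scalar_prod_def intro!: sum.cong)
  also have "\<dots> = (\<Sum>l\<in>{0..<n}. if l = j then A $$ (i,j) * f j else 0)"
    by (rule sum.cong, auto)
  also have "\<dots> = A $$ (i,j) * f j" using j by simp
  finally show "(A * dg n f) $$ (i,j) = mat m n (\<lambda>(i,j). A $$ (i,j) * f j) $$ (i,j)" using i j by simp
qed (insert A, auto)

lemma dg_mult: assumes A: "(A :: 'a :: semiring_0 mat) \<in> carrier_mat n m"
  shows "dg n f * A = mat n m (\<lambda>(i,j). f i * A $$ (i,j))"
proof (rule eq_matI)
  fix i j assume i: "i < dim_row (mat n m (\<lambda>(i,j). f i * A $$ (i,j)))" and j: "j < dim_col (mat n m (\<lambda>(i,j). f i * A $$ (i,j)))"
  then have i: "i < n" and j: "j < m" by auto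
  have "(dg n f * A) $$ (i,j) = (\<Sum>l\<in>{0..<n}. (if i = l then f i else 0) * A $$ (l,j))"
    using A i j by (auto simp: scalar_prod_def intro!: sum.cong)
  also have "\<dots> = (\<Sum>l\<in>{0..<n}. if l = i then f i * A $$ (i,j) else 0)"
    by (rule sum.cong, auto)
  also have "\<dots> = f i * A $$ (i,j)" using i by simp
  finally show "(dg n f * A) $$ (i,j) = mat n m (\<lambda>(i,j). f i * A $$ (i,j)) $$ (i,j)" using i j by simp
qed (insert A, auto)

lemma dg_dg: "dg n f * dg n g = dg n (\<lambda>i. (f i :: 'a :: semiring_0) * g i)"
  by (subst mult_dg[of _ n], simp, rule eq_matI, auto)

definition Xm :: "nat \<Rightarrow> nat set \<Rightarrow> complex mat" where
  "Xm n A = mat n n (\<lambda>(i,j). if (j + n - i) mod n \<in> A then 1 else 0)"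
definition Hm :: "nat \<Rightarrow> nat set \<Rightarrow> complex mat" where
  "Hm n B = mat n n (\<lambda>(i,j). if (i + j) mod n \<in> B then 1 else 0)"
definition Fm :: "nat \<Rightarrow> complex \<Rightarrow> complex mat" where
  "Fm n w = mat n n (\<lambda>(i,k). (w ^ k) ^ i)"
definition Gm :: "nat \<Rightarrow> complex \<Rightarrow> complex mat" where
  "Gm n w = mat n n (\<lambda>(i,k). inverse (w ^ k) ^ i)"

lemma XHFG_carrier[simp]: "Xm n A \<in> carrier_mat n n" "Hm n B \<in> carrier_mat n n"
  "Fm n w \<in> carrier_mat n n" "Gm n w \<in> carrier_mat n n"
  by (auto simp: Xm_def Hm_def Fm_def Gm_def)

lemma XHFG_dims[simp]: "dim_row (Xm n A) = n" "dim_row (Hm n B) = n" "dim_row (Fm n w) = n" "dim_row (Gm n w) = n"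
  "dim_col (Xm n A) = n" "dim_col (Hm n B) = n" "dim_col (Fm n w) = n" "dim_col (Gm n w) = n"
  by (auto simp: Xm_def Hm_def Fm_def Gm_def)

definition lam :: "nat set \<Rightarrow> complex \<Rightarrow> nat \<Rightarrow> complex" where
  "lam A w k = (\<Sum>a\<in>A. (w ^ k) ^ a)"
definition mu :: "nat set \<Rightarrow> complex \<Rightarrow> nat \<Rightarrow> complex" where
  "mu B w k = (\<Sum>b\<in>B. (w ^ k) ^ b)"
definition mu' :: "nat set \<Rightarrow> complex \<Rightarrow> nat \<Rightarrow> complex" where
  "mu' B w k = (\<Sum>b\<in>B. inverse (w ^ k) ^ b)"

lemma sum_inv_sym: assumes z: "(z::complex) ^ n = 1" and A: "A \<subseteq> {1..<n}"
  and sym: "\<And>a. a \<in> A \<Longrightarrow> n - a \<in> A"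
  shows "(\<Sum>a\<in>A. inverse z ^ a) = (\<Sum>a\<in>A. z ^ a)"
proof (rule sum.reindex_bij_witness[where i = "\<lambda>a. n - a" and j = "\<lambda>a. n - a"])
  fix a assume a: "a \<in> A"
  then show "n - (n - a) = a" "n - a \<in> A" using A sym by auto
  have na: "a + (n - a) = n" using a A by auto
  have "z ^ a * z ^ (n - a) = 1" using z by (simp only: power_add[symmetric] na)
  then have "inverse (z ^ a) = z ^ (n - a)" by (rule inverse_unique)
  then show "z ^ (n - a) = inverse z ^ a"
    by (simp add: power_inverse)
next
  fix b assume "b \<in> A"
  then show "n - (n - b) = b" "n - b \<in> A" using A sym by auto
qed

context
  fixes n :: nat and w :: complex and A B :: "nat set"
  assumes wn: "w ^ n = 1" and A: "A \<subseteq> {1..<n}" and B: "B \<subseteq> {0..<n}"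
  and sym: "\<And>a. a \<in> A \<Longrightarrow> n - a \<in> A"
begin

lemma wk1: "(w ^ k) ^ n = 1" "(inverse (w ^ k)) ^ n = 1"
proof -
  show 1: "(w ^ k) ^ n = 1" using wn by (metis mult.commute power_mult power_one)
  show "(inverse (w ^ k)) ^ n = 1" using 1 by (simp add: power_inverse)
qed

lemma A': "A \<subseteq> {..<n}" using A by auto
lemma B': "B \<subseteq> {..<n}" using B by auto

lemma XF: "Xm n A * Fm n w = Fm n w * dg n (lam A w)"
proof (rule eq_matI)
  fix i k assume "i < dim_row (Fm n w * dg n (lam A w))" "k < dim_col (Fm n w * dg n (lam A w))"
  then have i: "i < n" and k: "k < n" by (auto simp: Fm_def Gm_def)
  have "(Xm n A * Fm n w) $$ (i,k) = (\<Sum>j\<in>{0..<n}. (if (j + n - i) mod n \<in> A then 1 else 0) * (w^k)^j)"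
    using i k by (auto simp: scalar_prod_def Xm_def Fm_def intro!: sum.cong)
  also have "\<dots> = (w^k)^i * lam A w k" unfolding lam_def by (rule sumX[OF wk1(1) i A'])
  finally show "(Xm n A * Fm n w) $$ (i,k) = (Fm n w * dg n (lam A w)) $$ (i,k)"
    using i k by (simp add: mult_dg[of _ n n] Fm_def)
qed auto

lemma XG: "Xm n A * Gm n w = Gm n w * dg n (lam A w)"
proof (rule eq_matI)
  fix i k assume "i < dim_row (Gm n w * dg n (lam A w))" "k < dim_col (Gm n w * dg n (lam A w))"
  then have i: "i < n" and k: "k < n" by (auto simp: Fm_def Gm_def)
  have "(Xm n A * Gm n w) $$ (i,k) = (\<Sum>j\<in>{0..<n}. (if (j + n - i) mod n \<in> A then 1 else 0) * (inverse (w^k))^j)"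
    using i k by (auto simp: scalar_prod_def Xm_def Gm_def intro!: sum.cong)
  also have "\<dots> = (inverse (w^k))^i * (\<Sum>a\<in>A. inverse (w ^ k) ^ a)" by (rule sumX[OF wk1(2) i A'])
  also have "(\<Sum>a\<in>A. inverse (w ^ k) ^ a) = lam A w k" unfolding lam_def
    by (rule sum_inv_sym[OF wk1(1) A sym])
  finally show "(Xm n A * Gm n w) $$ (i,k) = (Gm n w * dg n (lam A w)) $$ (i,k)"
    using i k by (simp add: mult_dg[of _ n n] Gm_def)
qed auto

lemma HG: "Hm n B * Gm n w = Fm n w * dg n (mu' B w)"
proof (rule eq_matI)
  fix i k assume "i < dim_row (Fm n w * dg n (mu' B w))" "k < dim_col (Fm n w * dg n (mu' B w))"
  then have i: "i < n" and k: "k < n" by (auto simp: Fm_def Gm_def)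
  have "(Hm n B * Gm n w) $$ (i,k) = (\<Sum>j\<in>{0..<n}. (if (i + j) mod n \<in> B then 1 else 0) * (inverse (w^k))^j)"
    using i k by (auto simp: scalar_prod_def Hm_def Gm_def intro!: sum.cong)
  also have "\<dots> = inverse (inverse (w^k))^i * mu' B w k" unfolding mu'_def by (rule sumH[OF wk1(2) i B'])
  finally show "(Hm n B * Gm n w) $$ (i,k) = (Fm n w * dg n (mu' B w)) $$ (i,k)"
    using i k by (simp add: mult_dg[of _ n n] Fm_def)
qed auto

lemma HF: "Hm n B * Fm n w = Gm n w * dg n (mu B w)"
proof (rule eq_matI)
  fix i k assume "i < dim_row (Gm n w * dg n (mu B w))" "k < dim_col (Gm n w * dg n (mu B w))"
  then have i: "i < n" and k: "k < n" by (auto simp: Fm_def Gm_def)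
  have "(Hm n B * Fm n w) $$ (i,k) = (\<Sum>j\<in>{0..<n}. (if (i + j) mod n \<in> B then 1 else 0) * (w^k)^j)"
    using i k by (auto simp: scalar_prod_def Hm_def Fm_def intro!: sum.cong)
  also have "\<dots> = inverse (w^k)^i * mu B w k" unfolding mu_def by (rule sumH[OF wk1(1) i B'])
  finally show "(Hm n B * Fm n w) $$ (i,k) = (Gm n w * dg n (mu B w)) $$ (i,k)"
    using i k by (simp add: mult_dg[of _ n n] Gm_def)
qed auto

end

definition om :: "nat \<Rightarrow> complex" where "om n = cis (2 * pi / real n)"

lemma om_pow: "om n ^ k = cis (2 * pi * real k / real n)"
  unfolding om_def DeMoivre by (simp add: field_simps)

lemma om_n: assumes "n > 0" shows "om n ^ n = 1"
  unfolding om_pow using assms by simp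

lemma om_inj: assumes "n > 0" "k < n" "l < n" "om n ^ k = om n ^ l" shows "k = l"
  using bij_betw_roots_unity[OF assms(1)] assms(2-4) unfolding bij_betw_def inj_on_def om_pow
  by auto

lemma om_roots: assumes "n > 0" "z ^ n = 1" shows "\<exists>k<n. z = om n ^ k"
  using bij_betw_roots_unity[OF assms(1)] assms(2) unfolding bij_betw_def om_pow
  by auto

lemma om_nz[simp]: "om n \<noteq> 0" unfolding om_def by simp

lemma pow_swap: "((x::complex) ^ i) ^ k = (x ^ k) ^ i"
  by (simp add: power_mult[symmetric] mult.commute)

lemma orth: assumes n: "n > 0" and a: "a < n" and b: "b < n"
  shows "(\<Sum>i\<in>{0..<n}. (om n ^ a * inverse (om n ^ b)) ^ i) = (if a = b then of_nat n else 0)"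
proof (cases "a = b")
  case True then show ?thesis by simp
next
  case False
  let ?u = "om n ^ a * inverse (om n ^ b)"
  have "?u \<noteq> 1"
  proof
    assume "?u = 1"
    then have "om n ^ a = om n ^ b" by (simp add: field_simps)
    then show False using om_inj[OF n a b] False by simp
  qed
  moreover have "?u ^ n = 1"
  proof -
    have "(om n ^ a) ^ n = 1" "(om n ^ b) ^ n = 1" unfolding pow_swap[of _ _ n] om_n[OF n] by simp_all
    then show ?thesis by (simp add: power_mult_distrib power_inverse)
  qed
  ultimately have "(\<Sum>i<n. ?u ^ i) = 0" by (simp add: geometric_sum)
  then show ?thesis using False by (simp add: atLeast0LessThan)
qed

definition Gs :: "nat \<Rightarrow> complex \<Rightarrow> complex mat" where
  "Gs n w = mat n n (\<lambda>(i,k). inverse (w ^ k) ^ i / of_nat n)"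
definition Fs :: "nat \<Rightarrow> complex \<Rightarrow> complex mat" where
  "Fs n w = mat n n (\<lambda>(i,k). (w ^ k) ^ i / of_nat n)"

lemma GsFs_carrier[simp]: "Gs n w \<in> carrier_mat n n" "Fs n w \<in> carrier_mat n n"
  "dim_row (Gs n w) = n" "dim_col (Gs n w) = n" "dim_row (Fs n w) = n" "dim_col (Fs n w) = n"
  by (auto simp: Gs_def Fs_def)

lemma GsF: assumes n: "n > 0" shows "Gs n (om n) * Fm n (om n) = 1\<^sub>m n"
proof (rule eq_matI)
  fix k l assume "k < dim_row (1\<^sub>m n :: complex mat)" "l < dim_col (1\<^sub>m n :: complex mat)"
  then have k: "k < n" and l: "l < n" by auto
  have "(Gs n (om n) * Fm n (om n)) $$ (k,l) = (\<Sum>i\<in>{0..<n}. inverse (om n ^ i) ^ k / of_nat n * (om n ^ l) ^ i)"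
    using k l by (auto simp: scalar_prod_def Gs_def Fm_def intro!: sum.cong)
  also have "\<dots> = (\<Sum>i\<in>{0..<n}. (om n ^ l * inverse (om n ^ k)) ^ i) / of_nat n"
    by (simp add: sum_divide_distrib power_mult_distrib power_inverse pow_swap) (rule sum.cong, simp_all add: mult.commute)
  also have "\<dots> = (1\<^sub>m n :: complex mat) $$ (k,l)" using orth[OF n l k] k l n by auto
  finally show "(Gs n (om n) * Fm n (om n)) $$ (k,l) = (1\<^sub>m n :: complex mat) $$ (k,l)" .
qed auto

lemma FsG: assumes n: "n > 0" shows "Fs n (om n) * Gm n (om n) = 1\<^sub>m n"
proof (rule eq_matI)
  fix k l assume "k < dim_row (1\<^sub>m n :: complex mat)" "l < dim_col (1\<^sub>m n :: complex mat)"
  then have k: "k < n" and l: "l < n" by auto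
  have "(Fs n (om n) * Gm n (om n)) $$ (k,l) = (\<Sum>i\<in>{0..<n}. (om n ^ i) ^ k / of_nat n * inverse (om n ^ l) ^ i)"
    using k l by (auto simp: scalar_prod_def Fs_def Gm_def intro!: sum.cong)
  also have "\<dots> = (\<Sum>i\<in>{0..<n}. (om n ^ k * inverse (om n ^ l)) ^ i) / of_nat n"
    by (simp add: sum_divide_distrib power_mult_distrib power_inverse pow_swap)
  also have "\<dots> = (1\<^sub>m n :: complex mat) $$ (k,l)" using orth[OF n k l] k l n by auto
  finally show "(Fs n (om n) * Gm n (om n)) $$ (k,l) = (1\<^sub>m n :: complex mat) $$ (k,l)" .
qed auto

definition Pm :: "nat \<Rightarrow> complex mat" where
  "Pm n = four_block_mat (Fm n (om n)) (0\<^sub>m n n) (0\<^sub>m n n) (Gm n (om n))"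
definition Qm :: "nat \<Rightarrow> complex mat" where
  "Qm n = four_block_mat (Gs n (om n)) (0\<^sub>m n n) (0\<^sub>m n n) (Fs n (om n))"

lemma PQ_carrier[simp]: "Pm n \<in> carrier_mat (n+n) (n+n)" "Qm n \<in> carrier_mat (n+n) (n+n)"
  by (auto simp: Pm_def Qm_def)

lemma QP: assumes n: "n > 0" shows "Qm n * Pm n = 1\<^sub>m (n+n)"
  unfolding Pm_def Qm_def
  by (subst mult_four_block_mat[OF GsFs_carrier(1) zero_carrier_mat zero_carrier_mat GsFs_carrier(2) XHFG_carrier(3) zero_carrier_mat zero_carrier_mat XHFG_carrier(4)], auto simp: GsF[OF n] FsG[OF n])

lemma PQ: assumes n: "n > 0" shows "Pm n * Qm n = 1\<^sub>m (n+n)"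
  by (rule mat_mult_left_right_inverse[OF _ _ QP[OF n]]) auto

lemma det2: assumes A: "(A::'a::comm_ring_1 mat) \<in> carrier_mat 2 2" shows "det A = A$$(0,0)*A$$(1,1) - A$$(0,1)*A$$(1,0)"
proof -
  have "det A = (\<Sum>i<2. A $$ (i,0) * cofactor A i 0)" by (rule laplace_expansion_column[OF A], simp)
  also have "\<dots> = A $$ (0,0) * cofactor A 0 0 + A $$ (1,0) * cofactor A 1 0"
    by (simp add: numeral_2_eq_2)
  also have "cofactor A 0 0 = A $$ (1,1)" unfolding cofactor_def
    by (subst det_single, insert A, auto simp: mat_delete_def)
  also have "cofactor A 1 0 = - A $$ (0,1)" unfolding cofactor_def
    by (subst det_single, insert A, auto simp: mat_delete_def)
  finally show ?thesis by (simp add: algebra_simps)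
qed

lemma det_dg: "det (dg n (f :: nat \<Rightarrow> 'a :: comm_ring_1)) = (\<Prod>i\<in>{0..<n}. f i)"
  by (subst det_upper_triangular[of _ n], auto simp: prod_list_diag_prod intro!: prod.cong)

lemma dg_minus: "dg n f - dg n g = dg n (\<lambda>i. (f i :: 'a :: ab_group_add) - g i)"
  by (rule eq_matI, auto)

definition Dm :: "nat \<Rightarrow> nat set \<Rightarrow> nat set \<Rightarrow> complex mat" where
  "Dm n A B = four_block_mat (dg n (lam A (om n))) (dg n (mu' B (om n))) (dg n (mu B (om n))) (dg n (lam A (om n)))"
definition Mb :: "nat \<Rightarrow> nat set \<Rightarrow> nat set \<Rightarrow> complex mat" where
  "Mb n A B = four_block_mat (Xm n A) (Hm n B) (Hm n B) (Xm n A)"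

lemma DM_carrier[simp]: "Dm n A B \<in> carrier_mat (n+n) (n+n)" "Mb n A B \<in> carrier_mat (n+n) (n+n)"
  by (auto simp: Dm_def Mb_def)

lemma DMPQ_dims[simp]: "dim_row (Dm n A B) = n+n" "dim_col (Dm n A B) = n+n"
  "dim_row (Mb n A B) = n+n" "dim_col (Mb n A B) = n+n"
  "dim_row (Pm n) = n+n" "dim_col (Pm n) = n+n" "dim_row (Qm n) = n+n" "dim_col (Qm n) = n+n"
  by (auto simp: Dm_def Mb_def Pm_def Qm_def)

lemma char_poly_Dm: "char_poly (Dm n A B) = (\<Prod>k\<in>{0..<n}.
   [:- lam A (om n) k, 1:] * [:- lam A (om n) k, 1:] - [:- mu' B (om n) k:] * [:- mu B (om n) k:])"
proof -
  let ?l = "lam A (om n)" and ?m = "mu B (om n)" and ?m' = "mu' B (om n)"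
  have "char_poly_matrix (Dm n A B) = four_block_mat (dg n (\<lambda>k. [:- ?l k, 1:])) (dg n (\<lambda>k. [:- ?m' k:]))
     (dg n (\<lambda>k. [:- ?m k:])) (dg n (\<lambda>k. [:- ?l k, 1:]))"
    unfolding char_poly_matrix_def Dm_def by (rule eq_matI, auto)
  then have "char_poly (Dm n A B) = det (four_block_mat (dg n (\<lambda>k. [:- ?l k, 1:])) (dg n (\<lambda>k. [:- ?m' k:]))
     (dg n (\<lambda>k. [:- ?m k:])) (dg n (\<lambda>k. [:- ?l k, 1:])))" unfolding char_poly_def by simp
  also have "\<dots> = det (dg n (\<lambda>k. [:- ?l k, 1:]) * dg n (\<lambda>k. [:- ?l k, 1:]) - dg n (\<lambda>k. [:- ?m' k:]) * dg n (\<lambda>k. [:- ?m k:]))"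
    by (rule det_four_block_mat[of _ n], auto simp: dg_dg mult.commute)
  also have "\<dots> = (\<Prod>k\<in>{0..<n}. [:- ?l k, 1:] * [:- ?l k, 1:] - [:- ?m' k:] * [:- ?m k:])"
    by (simp add: dg_dg dg_minus det_dg)
  finally show ?thesis .
qed

lemma A_zeta_carrier[simp]: "A_zeta A B z \<in> carrier_mat 2 2" by (simp add: A_zeta_def)

lemma char_poly_A_zeta: "char_poly (A_zeta A B (om n ^ k)) =
   [:- lam A (om n) k, 1:] * [:- lam A (om n) k, 1:] - [:- mu' B (om n) k:] * [:- mu B (om n) k:]"
  unfolding char_poly_def
  by (subst det2[of _], simp, simp add: char_poly_matrix_def A_zeta_def lam_def mu_def mu'_def)

lemma char_poly_Dm': "char_poly (Dm n A B) = (\<Prod>k\<in>{0..<n}. char_poly (A_zeta A B (om n ^ k)))"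
  unfolding char_poly_Dm char_poly_A_zeta ..

lemma MbP: assumes n: "n > 0" and A: "A \<subseteq> {1..<n}" and B: "B \<subseteq> {0..<n}"
  and sym: "\<And>a. a \<in> A \<Longrightarrow> n - a \<in> A"
  shows "Mb n A B * Pm n = Pm n * Dm n A B"
proof -
  note wn = om_n[OF n]
  have "Mb n A B * Pm n = four_block_mat (Xm n A * Fm n (om n)) (Hm n B * Gm n (om n)) (Hm n B * Fm n (om n)) (Xm n A * Gm n (om n))"
    unfolding Mb_def Pm_def
    by (subst mult_four_block_mat[OF XHFG_carrier(1) XHFG_carrier(2) XHFG_carrier(2) XHFG_carrier(1) XHFG_carrier(3) zero_carrier_mat zero_carrier_mat XHFG_carrier(4)], auto)
  also have "\<dots> = four_block_mat (Fm n (om n) * dg n (lam A (om n))) (Fm n (om n) * dg n (mu' B (om n)))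
      (Gm n (om n) * dg n (mu B (om n))) (Gm n (om n) * dg n (lam A (om n)))"
    using XF[OF wn A B sym] XG[OF wn A B sym] HF[OF wn A B sym] HG[OF wn A B sym] by simp
  also have "\<dots> = Pm n * Dm n A B"
    unfolding Dm_def Pm_def
    by (subst mult_four_block_mat[OF XHFG_carrier(3) zero_carrier_mat zero_carrier_mat XHFG_carrier(4) dg_carrier dg_carrier dg_carrier dg_carrier], auto)
  finally show ?thesis .
qed

lemma char_poly_Mb: assumes n: "n > 0" and A: "A \<subseteq> {1..<n}" and B: "B \<subseteq> {0..<n}"
  and sym: "\<And>a. a \<in> A \<Longrightarrow> n - a \<in> A"
  shows "char_poly (Mb n A B) = (\<Prod>k\<in>{0..<n}. char_poly (A_zeta A B (om n ^ k)))"
proof -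
  have eq: "Mb n A B = Pm n * Dm n A B * Qm n"
  proof -
    have "Mb n A B = Mb n A B * (Pm n * Qm n)" using PQ[OF n] right_mult_one_mat[OF DM_carrier(2)] by simp
    also have "\<dots> = (Mb n A B * Pm n) * Qm n" by (rule assoc_mult_mat[symmetric], auto)
    finally show ?thesis using MbP[OF assms] by simp
  qed
  have "similar_mat (Mb n A B) (Dm n A B)"
    unfolding similar_mat_def
    by (rule exI[of _ "Pm n"], rule exI[of _ "Qm n"], unfold similar_mat_wit_def Let_def,
        insert eq PQ[OF n] QP[OF n], auto)
  then have "char_poly (Mb n A B) = char_poly (Dm n A B)" by (rule char_poly_similar)
  then show ?thesis unfolding char_poly_Dm' .
qed

lemma conn_F[simp]: "((x, False) \<in> dih_conn A B) = (x \<in> A)" by (auto simp: dih_conn_def)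
lemma conn_T[simp]: "((x, True) \<in> dih_conn A B) = (x \<in> B)" by (auto simp: dih_conn_def)

lemma adj_Mb: assumes n: "n > 0"
  shows "map_mat complex_of_real (dih_cay_adj_matrix n (dih_conn A B)) = Mb n A B"
proof (rule eq_matI)
  show "dim_row (map_mat complex_of_real (dih_cay_adj_matrix n (dih_conn A B))) = dim_row (Mb n A B)"
    "dim_col (map_mat complex_of_real (dih_cay_adj_matrix n (dih_conn A B))) = dim_col (Mb n A B)"
    by (auto simp: dih_cay_adj_matrix_def Mb_def)
  fix k l assume "k < dim_row (Mb n A B)" "l < dim_col (Mb n A B)"
  then have k: "k < n + n" and l: "l < n + n" by (auto simp: Mb_def)
  have lhs: "map_mat complex_of_real (dih_cay_adj_matrix n (dih_conn A B)) $$ (k,l) =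
     (if dih_mult n (dih_vertex n l) (dih_inv n (dih_vertex n k)) \<in> dih_conn A B then 1 else 0)"
    using k l by (auto simp: dih_cay_adj_matrix_def dih_cay_adj_def)
  have "(if dih_mult n (dih_vertex n l) (dih_inv n (dih_vertex n k)) \<in> dih_conn A B then 1 else 0) = Mb n A B $$ (k,l)"
  proof (cases "k < n"; cases "l < n")
    assume kn: "k < n" and ln: "l < n"
    have e: "(l + (n - k) mod n) mod n = (l + n - k) mod n" using kn by (simp add: mod_add_right_eq)
    show ?thesis using kn ln e by (simp add: Mb_def dih_vertex_def dih_inv_def dih_mult_def Xm_def)
  next
    assume kn: "k < n" and ln: "\<not> l < n"
    have e: "(l - n + (n - (n - k) mod n)) mod n = (k + (l - n)) mod n"
    proof (cases "k = 0")
      case True then show ?thesis by simp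
    next
      case False then show ?thesis using kn by (simp add: add.commute)
    qed
    have lm: "l mod n = l - n" using ln l by (simp add: le_mod_geq)
    show ?thesis using kn ln l e lm by (simp add: Mb_def dih_vertex_def dih_inv_def dih_mult_def Hm_def)
  next
    assume kn: "\<not> k < n" and ln: "l < n"
    have km: "k mod n = k - n" using kn k by (simp add: le_mod_geq)
    show ?thesis using kn ln k km by (simp add: Mb_def dih_vertex_def dih_inv_def dih_mult_def Hm_def add.commute)
  next
    assume kn: "\<not> k < n" and ln: "\<not> l < n"
    have km: "k mod n = k - n" using kn k by (simp add: le_mod_geq)
    have lm: "l mod n = l - n" using ln l by (simp add: le_mod_geq)
    have e: "l - n + (n - (k - n)) = l - n + n - (k - n)" using k by simp
    show ?thesis using kn ln k l km lm e by (simp add: Mb_def dih_vertex_def dih_inv_def dih_mult_def Xm_def)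
  qed
  then show "map_mat complex_of_real (dih_cay_adj_matrix n (dih_conn A B)) $$ (k,l) = Mb n A B $$ (k,l)"
    using lhs by simp
qed

lemma order_prod: assumes "finite S" "\<And>i. i \<in> S \<Longrightarrow> (f i :: 'a :: idom poly) \<noteq> 0"
  shows "order a (\<Prod>i\<in>S. f i) = (\<Sum>i\<in>S. order a (f i))"
  using assms
proof (induction S rule: finite_induct)
  case empty then show ?case by simp
next
  case (insert x F)
  have "(\<Prod>i\<in>F. f i) \<noteq> 0" using insert by (simp add: prod_zero_iff)
  then have "f x * (\<Prod>i\<in>F. f i) \<noteq> 0" using insert by simp
  then show ?case using insert by (simp add: order_mult)
qed

interpretation of_real_poly_hom: map_poly_inj_idom_divide_hom complex_of_real ..

lemma cp_A_zeta: "char_poly (A_zeta A B z) =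
   [: (\<Sum>a\<in>A. z ^ a) * (\<Sum>a\<in>A. z ^ a) - (\<Sum>b\<in>B. inverse z ^ b) * (\<Sum>b\<in>B. z ^ b), - 2 * (\<Sum>a\<in>A. z ^ a), 1:]"
  unfolding char_poly_def
  by (subst det2[of _], simp, simp add: char_poly_matrix_def A_zeta_def algebra_simps)

lemma det_A_zeta: "det (A_zeta A B z) = (\<Sum>a\<in>A. z ^ a) * (\<Sum>a\<in>A. z ^ a) - (\<Sum>b\<in>B. inverse z ^ b) * (\<Sum>b\<in>B. z ^ b)"
  by (subst det2[of _], simp, simp add: A_zeta_def)

lemma order_quad: fixes c0 c1 :: "'a :: idom"
  shows "order 0 [:c0, c1, 1:] = (if c0 \<noteq> 0 then 0 else if c1 \<noteq> 0 then 1 else (2::nat))"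
proof (cases "c0 = 0")
  case False
  then show ?thesis by (simp add: order_0I)
next
  case True
  have "[:c0, c1, 1:] = [:0, 1:] * [:c1, 1:]" using True by simp
  moreover have "order 0 [:0::'a, 1:] = (1::nat)" using order_power_n_n[of "0::'a" 1] by simp
  moreover have "order 0 [:c1, 1:] = (if c1 \<noteq> 0 then 0 else 1)"
    using order_power_n_n[of "0::'a" 1] by (auto simp: order_0I)
  ultimately show ?thesis using True order_mult[of "[:0::'a, 1:]" "[:c1, 1:]" 0] by auto
qed

lemma mz_A_zeta: "mult_zero_eig (A_zeta A B z) =
  (if det (A_zeta A B z) \<noteq> 0 then 0 else if (\<Sum>a\<in>A. z ^ a) \<noteq> 0 then 1 else 2)"
  unfolding mult_zero_eig_def cp_A_zeta order_quad det_A_zeta by simp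

lemma cp_A_zeta_nz: "char_poly (A_zeta A B z) \<noteq> 0"
  unfolding cp_A_zeta by simp

lemma mz_adj: assumes n: "n > 0" and A: "A \<subseteq> {1..<n}" and B: "B \<subseteq> {0..<n}"
  and sym: "\<And>a. a \<in> A \<Longrightarrow> n - a \<in> A"
  shows "mult_zero_eig (dih_cay_adj_matrix n (dih_conn A B)) = (\<Sum>k\<in>{0..<n}. mult_zero_eig (A_zeta A B (om n ^ k)))"
proof -
  let ?M = "dih_cay_adj_matrix n (dih_conn A B)"
  have M: "?M \<in> carrier_mat (2*n) (2*n)" by (simp add: dih_cay_adj_matrix_def)
  have "mult_zero_eig ?M = order (of_real 0) (map_poly complex_of_real (char_poly ?M))"
    unfolding mult_zero_eig_def of_real_poly_hom.order_hom by simp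
  also have "map_poly complex_of_real (char_poly ?M) = char_poly (Mb n A B)"
    unfolding of_real_hom.char_poly_hom[OF M, symmetric] adj_Mb[OF n] ..
  also have "\<dots> = (\<Prod>k\<in>{0..<n}. char_poly (A_zeta A B (om n ^ k)))" by (rule char_poly_Mb[OF assms])
  also have "order (of_real 0) \<dots> = (\<Sum>k\<in>{0..<n}. order 0 (char_poly (A_zeta A B (om n ^ k))))"
    by (simp add: order_prod cp_A_zeta_nz)
  finally show ?thesis unfolding mult_zero_eig_def .
qed

lemma sum_split2: fixes f :: "nat \<Rightarrow> 'a :: comm_monoid_add" shows "(\<Sum>j\<in>{0..<n+n}. f j) = (\<Sum>j\<in>{0..<n}. f j) + (\<Sum>j\<in>{0..<n}. f (n + j))"
proof -
  have "(\<Sum>j\<in>{0..<n+n}. f j) = (\<Sum>j\<in>{0..<n}. f j) + (\<Sum>j\<in>{n..<n+n}. f j)"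
    using sum.atLeastLessThan_concat[of 0 n "n+n" f] by simp
  also have "(\<Sum>j\<in>{n..<n+n}. f j) = (\<Sum>j\<in>{0..<n}. f (n + j))"
    using sum.shift_bounds_nat_ivl[of f 0 n n] by (simp add: add.commute)
  finally show ?thesis .
qed

lemma sum_single: assumes "k \<in> S" "finite S" "\<And>j. j \<in> S \<Longrightarrow> j \<noteq> k \<Longrightarrow> f j = 0"
  shows "sum f S = f k"
proof -
  have "sum f S = f k + sum f (S - {k})" using assms by (simp add: sum.remove)
  also have "sum f (S - {k}) = 0" using assms by (intro sum.neutral) auto
  finally show ?thesis by simp
qed

lemma mult_zero_vec': "A \<in> carrier_mat nr nc \<Longrightarrow> A *\<^sub>v 0\<^sub>v nc = (0\<^sub>v nr :: 'a :: semiring_0 vec)"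
  by (intro eq_vecI, auto simp: scalar_prod_def)

lemma mv_index: "A \<in> carrier_mat nr nc \<Longrightarrow> v \<in> carrier_vec nc \<Longrightarrow> i < nr \<Longrightarrow>
  (A *\<^sub>v v) $ i = (\<Sum>j\<in>{0..<nc}. A $$ (i,j) * v $ j)"
  by (auto simp: scalar_prod_def intro!: sum.cong)

lemma Dm_vec: assumes w: "w \<in> carrier_vec (n+n)" and k: "k < n"
  shows "(Dm n A B *\<^sub>v w) $ k = lam A (om n) k * w $ k + mu' B (om n) k * w $ (n + k)"
    "(Dm n A B *\<^sub>v w) $ (n + k) = mu B (om n) k * w $ k + lam A (om n) k * w $ (n + k)"
proof -
  have "(Dm n A B *\<^sub>v w) $ k = (\<Sum>j\<in>{0..<n}. Dm n A B $$ (k,j) * w $ j) + (\<Sum>j\<in>{0..<n}. Dm n A B $$ (k,n+j) * w $ (n+j))"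
    using k by (subst mv_index[OF DM_carrier(1) w], simp, subst sum_split2, simp)
  also have "(\<Sum>j\<in>{0..<n}. Dm n A B $$ (k,j) * w $ j) = (\<Sum>j\<in>{0..<n}. (if j = k then lam A (om n) k * w $ k else 0))"
    using k by (intro sum.cong) (auto simp: Dm_def)
  also have "(\<Sum>j\<in>{0..<n}. Dm n A B $$ (k,n+j) * w $ (n+j)) = (\<Sum>j\<in>{0..<n}. (if j = k then mu' B (om n) k * w $ (n+k) else 0))"
    using k by (intro sum.cong) (auto simp: Dm_def)
  finally show "(Dm n A B *\<^sub>v w) $ k = lam A (om n) k * w $ k + mu' B (om n) k * w $ (n + k)" using k by simp
  have "(Dm n A B *\<^sub>v w) $ (n+k) = (\<Sum>j\<in>{0..<n}. Dm n A B $$ (n+k,j) * w $ j) + (\<Sum>j\<in>{0..<n}. Dm n A B $$ (n+k,n+j) * w $ (n+j))"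
    using k by (subst mv_index[OF DM_carrier(1) w], simp, subst sum_split2, simp)
  also have "(\<Sum>j\<in>{0..<n}. Dm n A B $$ (n+k,j) * w $ j) = (\<Sum>j\<in>{0..<n}. (if j = k then mu B (om n) k * w $ k else 0))"
    using k by (intro sum.cong) (auto simp: Dm_def)
  also have "(\<Sum>j\<in>{0..<n}. Dm n A B $$ (n+k,n+j) * w $ (n+j)) = (\<Sum>j\<in>{0..<n}. (if j = k then lam A (om n) k * w $ (n+k) else 0))"
    using k by (intro sum.cong) (auto simp: Dm_def)
  finally show "(Dm n A B *\<^sub>v w) $ (n+k) = mu B (om n) k * w $ k + lam A (om n) k * w $ (n + k)" using k by simp
qed

lemma Pm_vec: assumes w: "w \<in> carrier_vec (n+n)" and i: "i < n"
  shows "(Pm n *\<^sub>v w) $ i = (\<Sum>j\<in>{0..<n}. (om n ^ j) ^ i * w $ j)"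
    "(Pm n *\<^sub>v w) $ (n + i) = (\<Sum>j\<in>{0..<n}. inverse (om n ^ j) ^ i * w $ (n + j))"
proof -
  have "(Pm n *\<^sub>v w) $ i = (\<Sum>j\<in>{0..<n}. Pm n $$ (i,j) * w $ j) + (\<Sum>j\<in>{0..<n}. Pm n $$ (i,n+j) * w $ (n+j))"
    using i by (subst mv_index[OF PQ_carrier(1) w], simp, subst sum_split2, simp)
  also have "(\<Sum>j\<in>{0..<n}. Pm n $$ (i,j) * w $ j) = (\<Sum>j\<in>{0..<n}. (om n ^ j) ^ i * w $ j)"
    using i by (intro sum.cong) (auto simp: Pm_def Fm_def)
  also have "(\<Sum>j\<in>{0..<n}. Pm n $$ (i,n+j) * w $ (n+j)) = 0"
    using i by (intro sum.neutral) (auto simp: Pm_def)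
  finally show "(Pm n *\<^sub>v w) $ i = (\<Sum>j\<in>{0..<n}. (om n ^ j) ^ i * w $ j)" by simp
  have "(Pm n *\<^sub>v w) $ (n+i) = (\<Sum>j\<in>{0..<n}. Pm n $$ (n+i,j) * w $ j) + (\<Sum>j\<in>{0..<n}. Pm n $$ (n+i,n+j) * w $ (n+j))"
    using i by (subst mv_index[OF PQ_carrier(1) w], simp, subst sum_split2, simp)
  also have "(\<Sum>j\<in>{0..<n}. Pm n $$ (n+i,j) * w $ j) = 0"
    using i by (intro sum.neutral) (auto simp: Pm_def)
  also have "(\<Sum>j\<in>{0..<n}. Pm n $$ (n+i,n+j) * w $ (n+j)) = (\<Sum>j\<in>{0..<n}. inverse (om n ^ j) ^ i * w $ (n + j))"
    using i by (intro sum.cong) (auto simp: Pm_def Gm_def)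
  finally show "(Pm n *\<^sub>v w) $ (n+i) = (\<Sum>j\<in>{0..<n}. inverse (om n ^ j) ^ i * w $ (n + j))" by simp
qed

lemma sum_eq_1_nat: assumes "finite S" "sum (f :: 'a \<Rightarrow> nat) S = 1"
  shows "\<exists>k\<in>S. f k = 1 \<and> (\<forall>j\<in>S. j \<noteq> k \<longrightarrow> f j = 0)"
proof -
  obtain k where k: "k \<in> S" "f k \<noteq> 0" using assms by (metis one_neq_zero sum.neutral)
  have "sum f S = f k + sum f (S - {k})" using assms k by (simp add: sum.remove)
  then have s: "f k + sum f (S - {k}) = 1" using assms by simp
  then have "f k = 1" "sum f (S - {k}) = 0" using k(2) by linarith+
  moreover have "\<forall>j\<in>S - {k}. f j = 0" using \<open>sum f (S - {k}) = 0\<close> assms(1) by simp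
  ultimately show ?thesis using k by auto
qed

lemma kernel_full:
  assumes n: "n > 0" and A: "A \<subseteq> {1..<n}" and B: "B \<subseteq> {0..<n}"
  and sym: "\<And>a. a \<in> A \<Longrightarrow> n - a \<in> A"
  and k0: "k0 < n" and m1: "mult_zero_eig (A_zeta A B (om n ^ k0)) = 1"
  and others: "\<And>k. k < n \<Longrightarrow> k \<noteq> k0 \<Longrightarrow> det (A_zeta A B (om n ^ k)) \<noteq> 0"
  and v: "v \<in> carrier_vec (2*n)" and nz: "v \<noteq> 0\<^sub>v (2*n)"
  and Mv: "dih_cay_adj_matrix n (dih_conn A B) *\<^sub>v v = 0\<^sub>v (2*n)"
  shows "\<forall>i<2*n. v $ i \<noteq> 0"
proof -
  let ?M = "dih_cay_adj_matrix n (dih_conn A B)"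
  let ?l = "lam A (om n)" and ?m = "mu B (om n)" and ?m' = "mu' B (om n)"
  have M: "?M \<in> carrier_mat (n+n) (n+n)" by (simp add: dih_cay_adj_matrix_def mult_2)
  have v': "v \<in> carrier_vec (n+n)" using v by (simp add: mult_2)
  define vc where "vc = map_vec complex_of_real v"
  have vc: "vc \<in> carrier_vec (n+n)" using v' by (simp add: vc_def)
  have Mbv: "Mb n A B *\<^sub>v vc = 0\<^sub>v (n+n)"
  proof -
    have "map_vec complex_of_real (?M *\<^sub>v v) = map_mat complex_of_real ?M *\<^sub>v vc"
      unfolding vc_def by (rule of_real_hom.mult_mat_vec_hom[OF M v'])
    moreover have "map_vec complex_of_real (0\<^sub>v (n+n)) = (0\<^sub>v (n+n) :: complex vec)" by (rule eq_vecI) auto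
    ultimately show ?thesis using Mv unfolding adj_Mb[OF n] by (auto simp: mult_2)
  qed
  define w where "w = Qm n *\<^sub>v vc"
  have w: "w \<in> carrier_vec (n+n)" unfolding w_def using vc by (rule mult_mat_vec_carrier[OF PQ_carrier(2)])
  have Pw: "Pm n *\<^sub>v w = vc"
    unfolding w_def using assoc_mult_mat_vec[OF PQ_carrier(1) PQ_carrier(2) vc] PQ[OF n] vc by simp
  have Deq: "Dm n A B = Qm n * (Mb n A B * Pm n)"
  proof -
    have "Qm n * (Mb n A B * Pm n) = Qm n * (Pm n * Dm n A B)" using MbP[OF n A B sym] by simp
    also have "\<dots> = (Qm n * Pm n) * Dm n A B" by (rule assoc_mult_mat[symmetric]) auto
    also have "\<dots> = Dm n A B" using QP[OF n] left_mult_one_mat[OF DM_carrier(1)] by simp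
    finally show ?thesis by simp
  qed
  have Dw: "Dm n A B *\<^sub>v w = 0\<^sub>v (n+n)"
  proof -
    have "Dm n A B *\<^sub>v w = Qm n *\<^sub>v ((Mb n A B * Pm n) *\<^sub>v w)"
      unfolding Deq by (rule assoc_mult_mat_vec[OF PQ_carrier(2) mult_carrier_mat[OF DM_carrier(2) PQ_carrier(1)] w])
    also have "(Mb n A B * Pm n) *\<^sub>v w = Mb n A B *\<^sub>v (Pm n *\<^sub>v w)"
      by (rule assoc_mult_mat_vec[OF DM_carrier(2) PQ_carrier(1) w])
    also have "\<dots> = 0\<^sub>v (n+n)" using Pw Mbv by simp
    finally show ?thesis using mult_zero_vec'[OF PQ_carrier(2)] by simp
  qed
  have eqs: "?l k * w $ k + ?m' k * w $ (n + k) = 0 \<and> ?m k * w $ k + ?l k * w $ (n + k) = 0" if k: "k < n" for k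
  proof -
    have "(Dm n A B *\<^sub>v w) $ k = 0" "(Dm n A B *\<^sub>v w) $ (n + k) = 0" using k unfolding Dw by auto
    then show ?thesis using Dm_vec[OF w k] by simp
  qed
  have detk: "det (A_zeta A B (om n ^ k)) = ?l k * ?l k - ?m' k * ?m k" for k
    unfolding det_A_zeta lam_def mu_def mu'_def ..
  have zero: "w $ k = 0 \<and> w $ (n + k) = 0" if k: "k < n" "k \<noteq> k0" for k
  proof -
    let ?a = "w $ k" and ?b = "w $ (n + k)"
    have d: "?l k * ?l k - ?m' k * ?m k \<noteq> 0" using others[OF k] detk by simp
    from eqs[OF k(1)] have e1: "?l k * ?a + ?m' k * ?b = 0" and e2: "?m k * ?a + ?l k * ?b = 0" by auto
    have "?a * (?l k * ?l k - ?m' k * ?m k) = ?l k * (?l k * ?a + ?m' k * ?b) - ?m' k * (?m k * ?a + ?l k * ?b)"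
      by (simp add: algebra_simps)
    then have "?a = 0" using e1 e2 d by simp
    moreover have "?b * (?l k * ?l k - ?m' k * ?m k) = ?l k * (?m k * ?a + ?l k * ?b) - ?m k * (?l k * ?a + ?m' k * ?b)"
      by (simp add: algebra_simps)
    then have "?b = 0" using e1 e2 d by simp
    ultimately show ?thesis by simp
  qed
  let ?a = "w $ k0" and ?b = "w $ (n + k0)"
  have k0facts: "?l k0 * ?l k0 - ?m' k0 * ?m k0 = 0" "?l k0 \<noteq> 0"
    using m1 unfolding mz_A_zeta detk by (auto split: if_splits simp: lam_def)
  from eqs[OF k0] have e1: "?l k0 * ?a + ?m' k0 * ?b = 0" and e2: "?m k0 * ?a + ?l k0 * ?b = 0" by auto
  have ab: "?a = 0 \<longleftrightarrow> ?b = 0"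
  proof
    assume "?a = 0" then show "?b = 0" using e2 k0facts(2) by simp
  next
    assume "?b = 0" then show "?a = 0" using e1 k0facts(2) by simp
  qed
  have vc1: "vc $ i = (om n ^ k0) ^ i * ?a" if i: "i < n" for i
  proof -
    have "vc $ i = (\<Sum>j\<in>{0..<n}. (om n ^ j) ^ i * w $ j)" using Pm_vec(1)[OF w i] Pw by simp
    also have "\<dots> = (om n ^ k0) ^ i * ?a" by (rule sum_single, insert k0 zero, auto)
    finally show ?thesis .
  qed
  have vc2: "vc $ (n + i) = inverse (om n ^ k0) ^ i * ?b" if i: "i < n" for i
  proof -
    have "vc $ (n + i) = (\<Sum>j\<in>{0..<n}. inverse (om n ^ j) ^ i * w $ (n + j))" using Pm_vec(2)[OF w i] Pw by simp
    also have "\<dots> = inverse (om n ^ k0) ^ i * ?b" by (rule sum_single, insert k0 zero, auto)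
    finally show ?thesis .
  qed
  have vci: "vc $ i = complex_of_real (v $ i)" if "i < n + n" for i using that v' by (simp add: vc_def)
  have all: "vc $ i = 0 \<longleftrightarrow> ?a = 0" if i: "i < n + n" for i
  proof (cases "i < n")
    case True then show ?thesis using vc1 by simp
  next
    case False
    then obtain i' where i': "i = n + i'" "i' < n" using i by (metis add_diff_inverse_nat add_less_imp_less_left)
    then show ?thesis using vc2[OF i'(2)] ab by simp
  qed
  have "?a \<noteq> 0"
  proof
    assume a0: "?a = 0"
    have "v = 0\<^sub>v (2*n)"
    proof (rule eq_vecI)
      fix i assume "i < dim_vec (0\<^sub>v (2*n) :: real vec)"
      then have i: "i < n + n" by simp
      then show "v $ i = 0\<^sub>v (2*n) $ i" using all[OF i] vci[OF i] a0 i by simp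
    qed (insert v, simp)
    then show False using nz by simp
  qed
  then show ?thesis using all vci by (auto simp: mult_2)
qed

theorem mainTheorem3:
  fixes n :: nat and A B :: "nat set"
  assumes "n \<ge> 3"
    and "A \<subseteq> {1..<n}" and "B \<subseteq> {0..<n}"
    and "\<forall>x \<in> dih_conn A B. dih_inv n x \<in> dih_conn A B"
  shows "is_nut_adj (dih_cay_adj_matrix n (dih_conn A B)) \<longleftrightarrow>
    ((\<exists>!z. z ^ n = 1 \<and> mult_zero_eig (A_zeta A B z) = 1) \<and>
     (\<forall>z. z ^ n = 1 \<and> mult_zero_eig (A_zeta A B z) \<noteq> 1 \<longrightarrow> det (A_zeta A B z) \<noteq> 0))"
proof -
  have n: "n > 0" using assms(1) by simp
  note A = assms(2) and B = assms(3)
  have sym: "n - a \<in> A" if a: "a \<in> A" for a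
  proof -
    have "(a, False) \<in> dih_conn A B" using a by simp
    then have "dih_inv n (a, False) \<in> dih_conn A B" using assms(4) by blast
    then have "(n - a) mod n \<in> A" by (simp add: dih_inv_def)
    moreover have "n - a < n" using a A by auto
    ultimately show ?thesis by simp
  qed
  let ?M = "dih_cay_adj_matrix n (dih_conn A B)"
  let ?m = "\<lambda>k. mult_zero_eig (A_zeta A B (om n ^ k))"
  have mz: "mult_zero_eig ?M = (\<Sum>k\<in>{0..<n}. ?m k)" by (rule mz_adj[OF n A B sym])
  have dims: "dim_row ?M = 2 * n" "dim_col ?M = 2 * n" by (simp_all add: dih_cay_adj_matrix_def)
  have root: "(om n ^ k) ^ n = 1" for k unfolding pow_swap[of _ k n] om_n[OF n] by simp
  have m0: "?m k = 0 \<longleftrightarrow> det (A_zeta A B (om n ^ k)) \<noteq> 0" for k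
    unfolding mz_A_zeta by simp
  show ?thesis
  proof
    assume nut: "is_nut_adj ?M"
    then have "(\<Sum>k\<in>{0..<n}. ?m k) = 1" unfolding is_nut_adj_def mz by simp
    from sum_eq_1_nat[OF _ this] obtain k0 where k0: "k0 < n" "?m k0 = 1"
      and oth: "\<And>j. j < n \<Longrightarrow> j \<noteq> k0 \<Longrightarrow> ?m j = 0" by auto
    show "(\<exists>!z. z ^ n = 1 \<and> mult_zero_eig (A_zeta A B z) = 1) \<and>
     (\<forall>z. z ^ n = 1 \<and> mult_zero_eig (A_zeta A B z) \<noteq> 1 \<longrightarrow> det (A_zeta A B z) \<noteq> 0)"
    proof (intro conjI allI impI)
      show "\<exists>!z. z ^ n = 1 \<and> mult_zero_eig (A_zeta A B z) = 1"
      proof (rule ex1I[of _ "om n ^ k0"])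
        show "(om n ^ k0) ^ n = 1 \<and> mult_zero_eig (A_zeta A B (om n ^ k0)) = 1" using root k0 by simp
      next
        fix y assume y: "y ^ n = 1 \<and> mult_zero_eig (A_zeta A B y) = 1"
        then obtain k where k: "k < n" "y = om n ^ k" using om_roots[OF n] by blast
        then have "?m k = 1" using y by simp
        then have "k = k0" using oth[OF k(1)] by (cases "k = k0") auto
        then show "y = om n ^ k0" using k by simp
      qed
    next
      fix z assume z: "z ^ n = 1 \<and> mult_zero_eig (A_zeta A B z) \<noteq> 1"
      then obtain k where k: "k < n" "z = om n ^ k" using om_roots[OF n] by blast
      then have "k \<noteq> k0" using z k0 by auto
      then have "?m k = 0" using oth k by simp
      then show "det (A_zeta A B z) \<noteq> 0" using m0 k by simp
    qed
  next
    assume rhs: "(\<exists>!z. z ^ n = 1 \<and> mult_zero_eig (A_zeta A B z) = 1) \<and>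
     (\<forall>z. z ^ n = 1 \<and> mult_zero_eig (A_zeta A B z) \<noteq> 1 \<longrightarrow> det (A_zeta A B z) \<noteq> 0)"
    then obtain z0 where z0: "z0 ^ n = 1" "mult_zero_eig (A_zeta A B z0) = 1"
      and uniq: "\<And>y. y ^ n = 1 \<Longrightarrow> mult_zero_eig (A_zeta A B y) = 1 \<Longrightarrow> y = z0" by blast
    have dets: "\<And>z. z ^ n = 1 \<Longrightarrow> mult_zero_eig (A_zeta A B z) \<noteq> 1 \<Longrightarrow> det (A_zeta A B z) \<noteq> 0"
      using rhs by blast
    obtain k0 where k0: "k0 < n" "z0 = om n ^ k0" using om_roots[OF n z0(1)] by blast
    have m1: "?m k0 = 1" using z0 k0 by simp
    have odet: "det (A_zeta A B (om n ^ k)) \<noteq> 0" if k: "k < n" "k \<noteq> k0" for k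
    proof -
      have "om n ^ k \<noteq> om n ^ k0" using om_inj[OF n k(1) k0(1)] k by auto
      then have "?m k \<noteq> 1" using uniq[OF root] k0 by auto
      then show ?thesis using dets[OF root] by simp
    qed
    have "(\<Sum>k\<in>{0..<n}. ?m k) = ?m k0"
      by (rule sum_single, insert k0 odet m0, auto)
    then have mM: "mult_zero_eig ?M = 1" using mz m1 by simp
    have ker: "\<forall>i<2*n. v $ i \<noteq> 0" if "v \<in> carrier_vec (2*n)" "v \<noteq> 0\<^sub>v (2*n)" "?M *\<^sub>v v = 0\<^sub>v (2*n)" for v
      by (rule kernel_full[OF n A B sym k0(1) m1 odet that])
    show "is_nut_adj ?M" unfolding is_nut_adj_def dims using mM ker assms(1) by auto
  qed
qed


end
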